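(* For every integer $m\ge1$: \[\sum_{q=1}^{m-1}\frac{\binom{m}{q}\binom{m-1}{q+2}}{\binom{2m}{2q}} = \frac{1}{6}m^2 -\frac{13}{6}m -3 +\frac{5}{2}\,4^m\frac{(m!)^2}{(2m)!},\] \[\sum_{q=1}^{m-1}\frac{\binom{m}{q}\binom{m-1}{q+1}}{\binom{2m}{2q}} = m +2 -\frac{3}{2}\,4^m\frac{(m!)^2}{(2m)!},\] \[\sum_{q=1}^{m-1}\frac{\binom{m}{q}\binom{m-1}{q}}{\binom{2m}{2q}} = -1 +\frac{1}{2}\,4^m\frac{(m!)^2}{(2m)!}.\]
   Context: Binomial coefficients $\binom{n}{k}$ are zero when $k>n$ or $k<0$. *)

theory Defs
  imports Complex_Main
begin

end

theory Submission
  imports Defs "HOL-Computational_Algebra.Formal_Power_Series"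
begin

definition cc :: "nat \<Rightarrow> real" where "cc k = fact (2*k) / (fact k ^ 2 * 4^k)"

lemma cc_pos: "cc k > 0" by (simp add: cc_def)

lemma cc_0: "cc 0 = 1" by (simp add: cc_def)

lemma cc_Suc: "cc (Suc k) = cc k * (2*k+1)/(2*k+2)"
proof -
  have f: "fact (2 * Suc k) = (2*real k+2)*(2*real k+1)*(fact (2*k) :: real)"
    by (simp add: fact_Suc algebra_simps)
  have g: "fact (Suc k) = (real k+1)*(fact k :: real)" by simp
  have gen: "F*((2*x+2)*(2*x+1))/(((x+1)*A)^2*(4*P)) = F/(A^2*P)*(2*x+1)/(2*x+2)"
    if "A>0" "P>0" "x\<ge>0" for F A P x :: real
  proof -
    have n1: "((x+1)*A)^2*(4*P) \<noteq> 0" using that by simp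
    have n2: "(A^2*P)*(2*x+2) \<noteq> 0" using that by simp
    have "F/(A^2*P)*(2*x+1)/(2*x+2) = F*(2*x+1)/((A^2*P)*(2*x+2))" by simp
    also have "\<dots> = F*((2*x+2)*(2*x+1))/(((x+1)*A)^2*(4*P))"
      apply (subst frac_eq_eq[OF n2 n1]) by (simp add: algebra_simps power2_eq_square)
    finally show ?thesis by simp
  qed
  show ?thesis unfolding cc_def f g using gen[of "fact k" "4^k" "real k" "fact (2*k)"]
    by (simp add: mult_ac add_ac)
qed

lemma cc_gchoose: "cc k = (-1)^k * ((-1/2 :: real) gchoose k)"
proof (induction k)
  case 0 then show ?case by (simp add: cc_0)
next
  case (Suc k)
  have g: "((-1/2 :: real) gchoose Suc k) = (-1/2 - real k) * ((-1/2::real) gchoose k) / (k+1)"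
    using gbinomial_mult_1[of "-1/2 :: real" k] by (simp add: field_simps)
  show ?case unfolding cc_Suc Suc g by (simp add: field_simps)
qed

lemma conv: "(\<Sum>q=0..m. cc q * cc (m-q)) = 1"
proof -
  have "(\<Sum>q=0..m. ((-1/2::real) gchoose q) * ((-1/2) gchoose (m-q))) = ((-1::real) gchoose m)"
    using gbinomial_Vandermonde[of "-1/2::real" "-1/2" m] by simp
  also have "\<dots> = (-1)^m" using gbinomial_minus[of "1::real" m] binomial_gbinomial[of m m, where 'a=real] by simp
  finally have *: "(\<Sum>q=0..m. ((-1/2::real) gchoose q) * ((-1/2) gchoose (m-q))) = (-1)^m" .
  have "(\<Sum>q=0..m. cc q * cc (m-q)) = (\<Sum>q=0..m. (-1)^m * (((-1/2::real) gchoose q) * ((-1/2) gchoose (m-q))))"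
  proof (rule sum.cong)
    fix q assume "q \<in> {0..m}"
    then have "(-1::real)^q * (-1)^(m-q) = (-1)^m" by (simp add: power_add[symmetric])
    then show "cc q * cc (m-q) = (-1)^m * (((-1/2::real) gchoose q) * ((-1/2) gchoose (m-q)))"
      unfolding cc_gchoose by (metis mult.assoc mult.left_commute)
  qed simp
  also have "\<dots> = (-1)^m * (\<Sum>q=0..m. ((-1/2::real) gchoose q) * ((-1/2) gchoose (m-q)))"
    by (rule sum_distrib_left[symmetric])
  also have "\<dots> = (-1)^m * (-1)^m" by (simp only: *)
  also have "\<dots> = (1::real)" by (simp flip: power_mult_distrib)
  finally show ?thesis .
qed

lemma reflsum: "(\<Sum>q=0..m. cc q * cc (m-q) * (real m - real q)) = real m / 2"
proof -
  have a: "(\<Sum>q=0..m. cc q * cc (m-q) * (real m - real q)) = (\<Sum>q=0..m. cc q * cc (m-q) * real q)"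
    apply (subst sum.atLeastAtMost_rev)
    apply (rule sum.cong) by (auto simp: of_nat_diff)
  have "(\<Sum>q=0..m. cc q * cc (m-q) * (real m - real q)) + (\<Sum>q=0..m. cc q * cc (m-q) * real q)
        = (\<Sum>q=0..m. cc q * cc (m-q) * real m)" by (simp add: sum.distrib[symmetric] algebra_simps)
  also have "\<dots> = real m" by (simp add: sum_distrib_right[symmetric] conv)
  finally show ?thesis using a by simp
qed

lemma termA:
  assumes "q \<le> m"
  shows "real (m choose q)^2 * cc m = real ((2*m) choose (2*q)) * cc q * cc (m-q)"
proof -
  obtain d where d: "m = q + d" using assms le_Suc_ex by blast
  have e: "2*m - 2*q = 2*d" "m - q = d" using d by auto
  have b1: "real (m choose q) = fact m / (fact q * fact d)" using binomial_fact[OF assms] e by simp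
  have b2: "real ((2*m) choose (2*q)) = fact (2*m) / (fact (2*q) * fact (2*d))"
    using binomial_fact[of "2*q" "2*m"] assms e by simp
  have p: "(4::real)^m = 4^q * 4^d" using d by (simp add: power_add)
  show ?thesis unfolding b1 b2 cc_def e p by (simp add: field_simps power2_eq_square)
qed

lemma binsuc: "real (n choose Suc p) = real (n choose p) * (real n - real p) / (real p + 1)"
proof -
  have "real n * (real n gchoose p) = real p * (real n gchoose p) + real (Suc p) * (real n gchoose Suc p)"
    by (rule gbinomial_mult_1)
  then have "real (Suc p) * real (n choose Suc p) = real (n choose p) * (real n - real p)"
    by (simp add: binomial_gbinomial algebra_simps)
  then show ?thesis by (simp add: field_simps)
qed

definition r0 :: "nat \<Rightarrow> nat \<Rightarrow> real" where "r0 m q = real m - real q"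
definition r1 :: "nat \<Rightarrow> nat \<Rightarrow> real" where
  "r1 m q = (real m - real q)*(real m - real q - 1)/(real q + 1)"
definition r2 :: "nat \<Rightarrow> nat \<Rightarrow> real" where
  "r2 m q = (real m - real q)*(real m - real q - 1)*(real m - real q - 2)/((real q+1)*(real q+2))"

lemma B0: assumes "1 \<le> m" "q \<le> m"
  shows "real ((m-1) choose q) = real (m choose q) * r0 m q / real m"
proof -
  have "real ((m - q) * (m choose q)) = real (m * ((m - 1) choose q))"
    by (simp only: binomial_absorb_comp)
  then show ?thesis using assms unfolding r0_def by (simp add: field_simps of_nat_diff)
qed

lemma B1: assumes "1 \<le> m" "q \<le> m"
  shows "real ((m-1) choose (q+1)) = real (m choose q) * r1 m q / real m"
proof -
  have "real ((m-1) choose (q+1)) = real ((m-1) choose q) * (real m - 1 - real q) / (real q + 1)"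
    using binsuc[of "m-1" q] assms by (simp add: of_nat_diff)
  also have "\<dots> = real (m choose q) * r0 m q / real m * (real m - 1 - real q) / (real q + 1)"
    by (simp only: B0[OF assms])
  also have "\<dots> = real (m choose q) * r1 m q / real m"
    unfolding r0_def r1_def by (simp add: field_simps)
  finally show ?thesis .
qed

lemma B2: assumes "1 \<le> m" "q \<le> m"
  shows "real ((m-1) choose (q+2)) = real (m choose q) * r2 m q / real m"
proof -
  have "real ((m-1) choose (q+2)) = real ((m-1) choose (q+1)) * (real m - 1 - (real q + 1)) / (real q + 2)"
    using binsuc[of "m-1" "q+1"] assms by (simp add: of_nat_diff)
  also have "\<dots> = real (m choose q) * r1 m q / real m * (real m - 1 - (real q + 1)) / (real q + 2)"
    by (simp only: B1[OF assms])
  also have "\<dots> = real (m choose q) * r2 m q / real m"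
    unfolding r1_def r2_def by (simp add: field_simps)
  finally show ?thesis .
qed

lemma termconv:
  assumes "1 \<le> m" "q \<le> m" "real ((m-1) choose (q+j)) = real (m choose q) * r / real m"
  shows "real (m choose q) * real ((m - 1) choose (q + j)) / real ((2*m) choose (2*q))
     = cc q * cc (m-q) * r / (real m * cc m)"
proof -
  have pos: "real (m choose q) > 0" "real ((2*m) choose (2*q)) > 0" "cc m > 0" "real m > 0"
    using assms by (auto simp: cc_pos)
  have A: "real (m choose q)^2 * cc m = real ((2*m) choose (2*q)) * cc q * cc (m-q)"
    by (rule termA[OF assms(2)])
  show ?thesis unfolding assms(3) using pos A
    by (simp add: field_simps power2_eq_square)
qed

definition F1 :: "nat \<Rightarrow> nat \<Rightarrow> real" where
  "F1 m q = -(2*real m + 1 - 2*real q)*(real m - real q) * cc q * cc (m-q)"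
definition F2 :: "nat \<Rightarrow> nat \<Rightarrow> real" where
  "F2 m q = (real q - real m)*(12*real q^2 - 2*(7*real m - 3)*real q + (2*real m^2 - 11*real m - 6))
     / (3*(real q+1)) * cc q * cc (m-q)"

lemma gen1: fixes x y a b d1 d2 d3 :: real
  assumes d: "d1 = x+1" "d2 = 2*x+2" "d3 = 2*y+2" and nz: "d1 \<noteq> 0" "d2 \<noteq> 0" "d3 \<noteq> 0"
  shows "a * (b * (2 * y + 1) / d3) *
     ((x + y + 1 - x) * (x + y + 1 - x - 1) / d1 + 3 * (x + y + 1 - x)) =
     - (2 * (x + y + 1) + 1 - 2 * (1 + x)) * (x + y + 1 - (1 + x)) * (a * (2 * x + 1) / d2) * b -
     - (2 * (x + y + 1) + 1 - 2 * x) * (x + y + 1 - x) * a * (b * (2 * y + 1) / d3)"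
proof -
  have eq: "a * (b * (2 * y + 1) / d3) *
     ((x + y + 1 - x) * (x + y + 1 - x - 1) / d1 + 3 * (x + y + 1 - x)) * (d1*d2*d3) =
     (- (2 * (x + y + 1) + 1 - 2 * (1 + x)) * (x + y + 1 - (1 + x)) * (a * (2 * x + 1) / d2) * b -
     - (2 * (x + y + 1) + 1 - 2 * x) * (x + y + 1 - x) * a * (b * (2 * y + 1) / d3)) * (d1*d2*d3)"
    using nz apply (simp add: field_simps)
    unfolding d by (simp add: algebra_simps)
  have nz': "d1*d2*d3 \<noteq> 0" using nz by simp
  show ?thesis using mult_right_cancel[OF nz'] eq by blast
qed

lemma gen2: fixes x y a b d1 d2 d3 d4 d5 :: real
  assumes d: "d1 = x+1" "d2 = 2*x+2" "d3 = 2*y+2" "d4 = x + 2" "d5 = 1 + x + 1"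
    and x: "x \<ge> 0" and y: "y \<ge> 0"
  shows "a * (b * (2 * y + 1) / d3) *
     ((x + y + 1 - x) * (x + y + 1 - x - 1) * (x + y + 1 - x - 2) / (d1 * d4) -
      5 * (x + y + 1 - x)) =
     (1 + x - (x + y + 1)) *
     (12 * (1 + x)\<^sup>2 - 2 * (7 * (x + y + 1) - 3) * (1 + x) +
      (2 * (x + y + 1)\<^sup>2 - 11 * (x + y + 1) - 6)) / (3 * d5) *
     (a * (2 * x + 1) / d2) * b -
     (x - (x + y + 1)) *
     (12 * x\<^sup>2 - 2 * (7 * (x + y + 1) - 3) * x + (2 * (x + y + 1)\<^sup>2 - 11 * (x + y + 1) - 6)) /
     (3 * d1) * a * (b * (2 * y + 1) / d3)"
proof -
  have s: "x + y + 1 - x = y+1" "x + y + 1 - x - 1 = y" "x + y + 1 - x - 2 = y - 1"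
     "1 + x - (x + y + 1) = -y" "x - (x + y + 1) = -(y+1)" "1 + x + 1 = x + 2" by simp_all
  define P1 where "P1 = 12 * (1 + x)\<^sup>2 - 2 * (7 * (x + y + 1) - 3) * (1 + x) +
      (2 * (x + y + 1)\<^sup>2 - 11 * (x + y + 1) - 6)"
  define P0 where "P0 = 12 * x\<^sup>2 - 2 * (7 * (x + y + 1) - 3) * x + (2 * (x + y + 1)\<^sup>2 - 11 * (x + y + 1) - 6)"
  define X1 where "X1 = x + 1"
  define X2 where "X2 = x + 2"
  define Y1 where "Y1 = y + 1"
  have pos: "X1 > 0" "X2 > 0" "Y1 > 0" using x y by (auto simp: X1_def X2_def Y1_def)
  have dd: "d1 = X1" "d2 = 2*X1" "d3 = 2*Y1" "d4 = X2" "d5 = X2"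
    using d by (auto simp: X1_def X2_def Y1_def)
  have L: "a * (b * (2 * y + 1) / (2*Y1)) * ((y+1) * y * (y - 1) / (X1 * X2) - 5 * (y+1))
     = a*b*(3*(2*y+1)*(y*(y-1)-5*X1*X2)) / (6*X1*X2)"
    using pos by (simp add: field_simps) (simp add: Y1_def algebra_simps)
  have R: "-y * P1 / (3 * X2) * (a * (2 * x + 1) / (2*X1)) * b - (-(y+1)) * P0 / (3 * X1) * a * (b * (2 * y + 1) / (2*Y1))
     = a*b*(-y*(2*x+1)*P1 + (2*y+1)*X2*P0) / (6*X1*X2)"
    using pos by (simp add: field_simps) (simp add: Y1_def algebra_simps)
  have poly: "3*(2*y+1)*(y*(y-1)-5*X1*X2) = -y*(2*x+1)*P1 + (2*y+1)*X2*P0"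
    unfolding P1_def P0_def X1_def X2_def by (simp add: algebra_simps power2_eq_square)
  show ?thesis unfolding s(2,3) unfolding s(1,4,5,6) P1_def[symmetric] P0_def[symmetric] dd
    unfolding L R poly by (rule refl)
qed
lemma tel1: assumes "Suc q \<le> m"
  shows "cc q * cc (m-q) * (r1 m q + 3 * r0 m q) = F1 m (Suc q) - F1 m q"
proof -
  obtain k where k0: "m = Suc q + k" using assms le_Suc_ex by blast
  then have k: "m = q + Suc k" by simp
  have e: "m - q = Suc k" "m - Suc q = k" "real m = real q + real k + 1" using k by auto
  show ?thesis unfolding F1_def r0_def r1_def e cc_Suc of_nat_Suc
    apply (simp only: of_nat_add of_nat_mult of_nat_numeral of_nat_1)
    by (rule gen1) auto
qed

lemma tel2: assumes "Suc q \<le> m"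
  shows "cc q * cc (m-q) * (r2 m q - 5 * r0 m q) = F2 m (Suc q) - F2 m q"
proof -
  obtain k where k0: "m = Suc q + k" using assms le_Suc_ex by blast
  then have k: "m = q + Suc k" by simp
  have e: "m - q = Suc k" "m - Suc q = k" "real m = real q + real k + 1" using k by auto
  show ?thesis unfolding F2_def r0_def r2_def e cc_Suc of_nat_Suc
    apply (simp only: of_nat_add of_nat_mult of_nat_numeral of_nat_1)
    by (rule gen2) auto
qed

lemma cc_1: "cc 1 = 1/2" using cc_Suc[of 0] by (simp add: cc_0)
lemma cc_1': "cc (Suc 0) = 1/2" using cc_1 by simp

lemma Tcc: "4^m * (fact m)^2 / fact (2*m) = 1 / cc m"
  unfolding cc_def by simp

theorem propositionA1:
  fixes m :: nat
  assumes "m \<ge> 1"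
  shows "((\<Sum>q=1..m-1. real (m choose q) * real ((m - 1) choose (q + 2)) / real ((2*m) choose (2*q)))
           = 1/6 * (real m)^2 - 13/6 * real m - 3 + 5/2 * 4^m * (fact m)^2 / fact (2*m))
    \<and> ((\<Sum>q=1..m-1. real (m choose q) * real ((m - 1) choose (q + 1)) / real ((2*m) choose (2*q)))
           = real m + 2 - 3/2 * 4^m * (fact m)^2 / fact (2*m))
    \<and> ((\<Sum>q=1..m-1. real (m choose q) * real ((m - 1) choose q) / real ((2*m) choose (2*q)))
           = -1 + 1/2 * 4^m * (fact m)^2 / fact (2*m))"
proof -
  obtain n where n: "m = Suc n" using assms by (cases m) auto
  have mn: "m - 1 = n" using n by simp
  define v where "v q = cc q * cc (m-q)" for q
  have conv0: "(\<Sum>q=1..m-1. real (m choose q) * real ((m - 1) choose (q + j)) / real ((2*m) choose (2*q)))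
     = (\<Sum>q=1..m-1. v q * r q) / (real m * cc m)"
    if hj: "\<And>q. q \<le> m \<Longrightarrow> real ((m-1) choose (q+j)) = real (m choose q) * r q / real m" for j r
    unfolding sum_divide_distrib
  proof (rule sum.cong)
    fix q assume "q \<in> {1..m-1}"
    then have q: "q \<le> m" by auto
    show "real (m choose q) * real ((m - 1) choose (q + j)) / real ((2*m) choose (2*q))
       = v q * r q / (real m * cc m)"
      unfolding v_def by (rule termconv[OF assms q hj[OF q]])
  qed simp
  have S0: "(\<Sum>q=1..m-1. real (m choose q) * real ((m - 1) choose q) / real ((2*m) choose (2*q)))
     = (\<Sum>q=1..m-1. v q * r0 m q) / (real m * cc m)"
    using conv0[of 0 "r0 m"] B0[OF assms] by simp
  have S1: "(\<Sum>q=1..m-1. real (m choose q) * real ((m - 1) choose (q+1)) / real ((2*m) choose (2*q)))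
     = (\<Sum>q=1..m-1. v q * r1 m q) / (real m * cc m)"
    using conv0[of 1 "r1 m"] B1[OF assms] by simp
  have S2: "(\<Sum>q=1..m-1. real (m choose q) * real ((m - 1) choose (q+2)) / real ((2*m) choose (2*q)))
     = (\<Sum>q=1..m-1. v q * r2 m q) / (real m * cc m)"
    using conv0[of 2 "r2 m"] B2[OF assms] by simp
  have W0: "(\<Sum>q=1..m-1. v q * r0 m q) = real m / 2 - real m * cc m"
  proof -
    have "real m / 2 = (\<Sum>q=0..m. v q * r0 m q)" using reflsum[of m] by (simp add: v_def r0_def)
    also have "\<dots> = v 0 * r0 m 0 + (\<Sum>q=1..m. v q * r0 m q)"
      by (simp add: sum.atLeast_Suc_atMost)
    also have "(\<Sum>q=1..m. v q * r0 m q) = (\<Sum>q=1..m-1. v q * r0 m q) + v m * r0 m m"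
      unfolding mn unfolding n by (simp add: sum.cl_ivl_Suc)
    finally have "real m / 2 = v 0 * r0 m 0 + ((\<Sum>q=1..m-1. v q * r0 m q) + v m * r0 m m)" .
    then show ?thesis by (simp add: v_def r0_def cc_0 field_simps)
  qed
  have ccm: "cc m = cc n * (2*real n+1)/(2*real n+2)" using cc_Suc[of n] n by (simp add: add_ac)
  have W1: "(\<Sum>q=1..m-1. v q * (r1 m q + 3 * r0 m q)) = real m * (real m - 1) * cc m"
  proof -
    have "(\<Sum>q=1..m-1. v q * (r1 m q + 3 * r0 m q)) = (\<Sum>q=1..n. F1 m (Suc q) - F1 m q)"
      unfolding mn by (rule sum.cong) (auto simp: v_def n intro!: tel1)
    also have "\<dots> = F1 m (Suc n) - F1 m 1" by (rule sum_Suc_diff) simp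
    also have "\<dots> = real m * (real m - 1) * cc m"
      unfolding F1_def ccm using n by (simp add: cc_1' field_simps)
    finally show ?thesis .
  qed
  have W2: "(\<Sum>q=1..m-1. v q * (r2 m q - 5 * r0 m q)) = real m * (real m - 1) * (real m - 12) / 6 * cc m"
  proof -
    have "(\<Sum>q=1..m-1. v q * (r2 m q - 5 * r0 m q)) = (\<Sum>q=1..n. F2 m (Suc q) - F2 m q)"
      unfolding mn by (rule sum.cong) (auto simp: v_def n intro!: tel2)
    also have "\<dots> = F2 m (Suc n) - F2 m 1" by (rule sum_Suc_diff) simp
    also have "\<dots> = real m * (real m - 1) * (real m - 12) / 6 * cc m"
      unfolding F2_def ccm using n by (simp add: cc_1' field_simps power2_eq_square)
    finally show ?thesis .
  qed
  have V1: "(\<Sum>q=1..m-1. v q * r1 m q) = real m * (real m - 1) * cc m - 3 * (real m / 2 - real m * cc m)"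
  proof -
    have "(\<Sum>q=1..m-1. v q * (r1 m q + 3 * r0 m q)) = (\<Sum>q=1..m-1. v q * r1 m q) + 3 * (\<Sum>q=1..m-1. v q * r0 m q)"
      by (simp add: distrib_left sum.distrib sum_distrib_left mult.left_commute)
    then have "(\<Sum>q=1..m-1. v q * r1 m q) = (\<Sum>q=1..m-1. v q * (r1 m q + 3 * r0 m q)) - 3 * (\<Sum>q=1..m-1. v q * r0 m q)"
      by linarith
    then show ?thesis unfolding W1 W0 .
  qed
  have V2: "(\<Sum>q=1..m-1. v q * r2 m q) = real m * (real m - 1) * (real m - 12) / 6 * cc m + 5 * (real m / 2 - real m * cc m)"
  proof -
    have "(\<Sum>q=1..m-1. v q * (r2 m q - 5 * r0 m q)) = (\<Sum>q=1..m-1. v q * r2 m q) - 5 * (\<Sum>q=1..m-1. v q * r0 m q)"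
      by (simp add: right_diff_distrib sum_subtractf sum_distrib_left mult.left_commute)
    then have "(\<Sum>q=1..m-1. v q * r2 m q) = (\<Sum>q=1..m-1. v q * (r2 m q - 5 * r0 m q)) + 5 * (\<Sum>q=1..m-1. v q * r0 m q)"
      by linarith
    then show ?thesis unfolding W2 W0 .
  qed
  have pos: "cc m > 0" "real m > 0" using cc_pos assms by auto
  have T: "c * 4^m * (fact m)^2 / fact (2*m) = c / cc m" for c :: real
  proof -
    have "c * 4^m * (fact m)^2 / fact (2*m) = c * (4^m * (fact m)^2 / fact (2*m))" by simp
    also have "\<dots> = c * (1 / cc m)" by (simp only: Tcc)
    finally show ?thesis by simp
  qed
  define M where "M = real m"
  define c where "c = cc m"
  have pos: "c > 0" "M > 0" using cc_pos assms by (auto simp: c_def M_def)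
  have g2: "(M * (M - 1) * (M - 12) / 6 * c + 5 * (M / 2 - M * c)) / (M * c)
      = 1/6 * M^2 - 13/6 * M - 3 + 5/2 / c"
    using pos by (simp add: field_simps power2_eq_square)
  have g1: "(M * (M - 1) * c - 3 * (M / 2 - M * c)) / (M * c) = M + 2 - 3/2 / c"
    using pos by (simp add: field_simps)
  have g0: "(M / 2 - M * c) / (M * c) = -1 + 1/2 / c"
    using pos by (simp add: field_simps)
  show ?thesis unfolding S0 S1 S2 W0 V1 V2 T
    using g0 g1 g2 unfolding M_def c_def by simp
qed

end
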